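(* Let $(t_j^i)_{0\le j\le i}$ be real numbers and let $h_{j,k}^i$ ($0\le k\le i$, $0\le j\le i-k$) be defined by $h_{j,0}^i=t_j^i$ and $h_{j,k}^i=h_{j,k-1}^{i-1}+h_{j,k-1}^{i}+h_{j+1,k-1}^{i}$ for $k\ge 1$. Suppose there is a constant $c$ with $t_0^i=t_i^i=c$ for all $i\ge 0$, and that $t^i_{j}=t^{i-1}_{j-1}+t^{i-1}_{j}$ for all $i\ge 2$, $1\le j\le i-1$. Then $t_j^i=t_{i-j}^i$ for all $0\le j\le i$, and for fixed $j,k\ge 0$ the sequences $\{h_{j,k}^{i}\}_{i=j+k}^{\infty}$ and $\{h_{i-(j+k),k}^{i}\}_{i=j+k}^{\infty}$ are equal and both satisfy $\sum_{\ell=0}^{j+k+1}(-1)^{\ell}\binom{j+k+1}{\ell} h^{i+\ell}=0$ for all $i\ge j+k$, i.e., they are the same $(j+k+1)$-th order homogeneous linear recurrence sequence. *)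

theory Defs
  imports Complex_Main
begin

text \<open>hh t i j k stands for h^i_{j,k}, built from the triangle t i j = t^i_j.
  Only the values with k \<le> i, j \<le> i - k are meaningful; the recursion
  stays inside that range.\<close>
fun hh :: "(nat \<Rightarrow> nat \<Rightarrow> real) \<Rightarrow> nat \<Rightarrow> nat \<Rightarrow> nat \<Rightarrow> real" where
  "hh t i j 0 = t i j"
| "hh t i j (Suc k) = hh t (i - 1) j k + hh t i j k + hh t i (j + 1) k"

end

theory Submission imports Defs begin

definition S :: "nat \<Rightarrow> (nat \<Rightarrow> real) \<Rightarrow> nat \<Rightarrow> real" where
  "S n f i = (\<Sum>l = 0..n. (-1) ^ l * real (n choose l) * f (i + l))"

lemma S_Suc: "S (Suc n) f i = S n f i - S n f (Suc i)"
proof -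
  have "S (Suc n) f i = (\<Sum>l = 0..Suc n. (-1) ^ l * real (n choose l) * f (i + l))
      + (\<Sum>l = 1..Suc n. (-1) ^ l * real (n choose (l - 1)) * f (i + l))"
  proof -
    have "S (Suc n) f i = (-1)^0 * real (Suc n choose 0) * f (i + 0) + (\<Sum>l = 1..Suc n. (-1) ^ l * real (Suc n choose l) * f (i + l))"
      unfolding S_def by (simp add: sum.atLeast_Suc_atMost)
    also have "(\<Sum>l = 1..Suc n. (-1) ^ l * real (Suc n choose l) * f (i + l))
       = (\<Sum>l = 1..Suc n. (-1) ^ l * real (n choose l) * f (i + l)) + (\<Sum>l = 1..Suc n. (-1) ^ l * real (n choose (l - 1)) * f (i + l))"
      unfolding sum.distrib[symmetric]
      by (rule sum.cong) (auto simp: binomial_Suc_Suc[of n "l - 1" for l, simplified] Suc_diff_1 algebra_simps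
            dest!: Suc_le_D)
    finally show ?thesis by (simp add: sum.atLeast_Suc_atMost)
  qed
  also have "(\<Sum>l = 0..Suc n. (-1) ^ l * real (n choose l) * f (i + l)) = S n f i"
    unfolding S_def by simp
  also have "(\<Sum>l = 1..Suc n. (-1) ^ l * real (n choose (l - 1)) * f (i + l))
      = (\<Sum>l = 0..n. (-1) ^ Suc l * real (n choose l) * f (i + Suc l))"
    by (simp only: One_nat_def sum.shift_bounds_cl_Suc_ivl) simp
  also have "\<dots> = - S n f (Suc i)"
    unfolding S_def by (simp add: sum_negf[symmetric])
  finally show ?thesis by simp
qed

lemma S_add: "S n (\<lambda>i. f i + g i) i = S n f i + S n g i"
  unfolding S_def by (simp add: sum.distrib algebra_simps)

lemma S_diff: "S n (\<lambda>i. f i - g i) i = S n f i - S n g i"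
  unfolding S_def by (simp add: sum_subtractf algebra_simps)

lemma S_scale: "S n (\<lambda>i. a * f i) i = a * S n f i"
  unfolding S_def by (simp add: sum_distrib_left algebra_simps)

lemma S_shift: "1 \<le> i \<Longrightarrow> S n (\<lambda>i. f (i - 1)) i = S n f (i - 1)"
  unfolding S_def by (rule sum.cong) auto

lemma S_shift1: "S n f (Suc i) = S n (\<lambda>i. f (Suc i)) i"
  unfolding S_def by (rule sum.cong) auto

lemma S_cong: "(\<And>x. x \<ge> i \<Longrightarrow> f x = g x) \<Longrightarrow> S n f i = S n g i"
  unfolding S_def by (rule sum.cong) auto

lemma S_binom: "S (Suc j) (\<lambda>i. real (i choose j)) i = 0"
proof (induction j arbitrary: i)
  case 0
  then show ?case by (simp add: S_def)
next
  case (Suc j)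
  have "S (Suc (Suc j)) (\<lambda>i. real (i choose Suc j)) i
     = - (S (Suc j) (\<lambda>i. real (Suc i choose Suc j)) i - S (Suc j) (\<lambda>i. real (i choose Suc j)) i)"
    by (simp add: S_Suc S_shift1 del: binomial_Suc_Suc)
  also have "\<dots> = - S (Suc j) (\<lambda>i. real (Suc i choose Suc j) - real (i choose Suc j)) i"
    by (simp add: S_diff del: binomial_Suc_Suc)
  also have "(\<lambda>i. real (Suc i choose Suc j) - real (i choose Suc j)) = (\<lambda>i. real (i choose j))"
    by auto
  finally show ?case using Suc by simp
qed

definition PP :: "nat \<Rightarrow> (nat \<Rightarrow> real) \<Rightarrow> nat \<Rightarrow> bool" where
  "PP n f m \<longleftrightarrow> (\<forall>i\<ge>m. S (Suc n) f i = 0)"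

lemma PP_up: "PP n f m \<Longrightarrow> PP (Suc n) f m"
  unfolding PP_def by (subst S_Suc) auto

lemma PP_mono: "PP n f m \<Longrightarrow> m \<le> m' \<Longrightarrow> PP n f m'"
  unfolding PP_def by auto

lemma PP_up_le: assumes "PP n f m" "n \<le> n'" shows "PP n' f m"
  using assms(2,1) by (induction n' rule: dec_induct) (auto intro: PP_up)

lemma t_binom:
  fixes t :: "nat \<Rightarrow> nat \<Rightarrow> real" and c :: real
  assumes bound: "\<And>i. t i 0 = c \<and> t i i = c"
    and pascal: "\<And>i j. 2 \<le> i \<Longrightarrow> 1 \<le> j \<Longrightarrow> j \<le> i - 1 \<Longrightarrow>
                   t i j = t (i - 1) (j - 1) + t (i - 1) j"
  shows "j \<le> i \<Longrightarrow> t i j = c * real (i choose j)"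
proof (induction i arbitrary: j)
  case 0
  then show ?case using bound by simp
next
  case (Suc i)
  show ?case
  proof (cases "j = 0 \<or> j = Suc i")
    case True
    then show ?thesis using bound by auto
  next
    case False
    then obtain j' where j: "j = Suc j'" "j' < i" using Suc.prems by (cases j) auto
    have "t (Suc i) j = t i j' + t i j" using pascal[of "Suc i" j] j by simp
    also have "\<dots> = c * real (i choose j') + c * real (i choose j)"
      using Suc.IH j by simp
    finally show ?thesis using j by (simp add: algebra_simps)
  qed
qed


lemma hh_PP:
  fixes t :: "nat \<Rightarrow> nat \<Rightarrow> real" and c :: real
  assumes tb: "\<And>i j. j \<le> i \<Longrightarrow> t i j = c * real (i choose j)"
  shows "PP (j + k) (\<lambda>i. hh t i j k) (j + k)"
proof (induction k arbitrary: j)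
  case 0
  show ?case unfolding PP_def
  proof (intro allI impI)
    fix i assume "j + 0 \<le> i"
    have "S (Suc (j + 0)) (\<lambda>i. hh t i j 0) i = S (Suc j) (\<lambda>i. c * real (i choose j)) i"
      using \<open>j + 0 \<le> i\<close> by (simp only: add_0_right, intro S_cong) (simp add: tb)
    also have "\<dots> = 0" by (simp add: S_scale S_binom)
    finally show "S (Suc (j + 0)) (\<lambda>i. hh t i j 0) i = 0" .
  qed
next
  case (Suc k)
  have A: "PP (j + Suc k) (\<lambda>i. hh t i j k) (j + k)"
    using Suc.IH[of j] by (rule PP_up_le) simp
  have B: "PP (j + Suc k) (\<lambda>i. hh t i (j+1) k) (j + Suc k)"
    using Suc.IH[of "j+1"] by simp
  show ?case unfolding PP_def
  proof (intro allI impI)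
    fix i assume i: "j + Suc k \<le> i"
    let ?N = "Suc (j + Suc k)"
    have "S ?N (\<lambda>i. hh t i j (Suc k)) i
       = S ?N (\<lambda>i. hh t (i - 1) j k) i + S ?N (\<lambda>i. hh t i j k) i + S ?N (\<lambda>i. hh t i (j+1) k) i"
      by (simp add: S_add)
    also have "S ?N (\<lambda>i. hh t (i - 1) j k) i = S ?N (\<lambda>i. hh t i j k) (i - 1)"
      using i by (intro S_shift) simp
    also have "\<dots> = 0" using A i unfolding PP_def by simp
    also have "S ?N (\<lambda>i. hh t i j k) i = 0" using A i unfolding PP_def by simp
    also have "S ?N (\<lambda>i. hh t i (j+1) k) i = 0" using B i unfolding PP_def by simp
    finally show "S ?N (\<lambda>i. hh t i j (Suc k)) i = 0" by simp
  qed
qed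

lemma hh_sym:
  fixes t :: "nat \<Rightarrow> nat \<Rightarrow> real"
  assumes ts: "\<And>i j. j \<le> i \<Longrightarrow> t i j = t i (i - j)"
  shows "j + k \<le> i \<Longrightarrow> hh t i j k = hh t i (i - (j + k)) k"
proof (induction k arbitrary: i j)
  case 0
  then show ?case using ts[of j i] by simp
next
  case (Suc k)
  have le1: "j + k \<le> i - 1" and le2: "j + k \<le> i" and le3: "(j + 1) + k \<le> i"
    using Suc.prems by simp_all
  have a1: "i - 1 - (j + k) = i - (j + Suc k)" and a2: "i - (j + k) = i - (j + Suc k) + 1"
    and a3: "i - (j + 1 + k) = i - (j + Suc k)"
    using Suc.prems by simp_all
  have e1: "hh t (i - 1) j k = hh t (i - 1) (i - (j + Suc k)) k"
    using Suc.IH[OF le1] unfolding a1 .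
  have e2: "hh t i j k = hh t i (i - (j + Suc k) + 1) k"
    using Suc.IH[OF le2] unfolding a2 .
  have e3: "hh t i (j + 1) k = hh t i (i - (j + Suc k)) k"
    using Suc.IH[OF le3] unfolding a3 .
  show ?case unfolding hh.simps e1 e2 e3 by linarith
qed

theorem corollary8:
  fixes t :: "nat \<Rightarrow> nat \<Rightarrow> real" and c :: real
  assumes bound: "\<And>i. t i 0 = c \<and> t i i = c"
    and pascal: "\<And>i j. 2 \<le> i \<Longrightarrow> 1 \<le> j \<Longrightarrow> j \<le> i - 1 \<Longrightarrow>
                   t i j = t (i - 1) (j - 1) + t (i - 1) j"
  shows "(\<forall>i j. j \<le> i \<longrightarrow> t i j = t i (i - j))
    \<and> (\<forall>j k i. j + k \<le> i \<longrightarrow> hh t i j k = hh t i (i - (j + k)) k)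
    \<and> (\<forall>j k i. j + k \<le> i \<longrightarrow>
          (\<Sum>l = 0..j + k + 1. (-1) ^ l * real (j + k + 1 choose l) * hh t (i + l) j k) = 0)
    \<and> (\<forall>j k i. j + k \<le> i \<longrightarrow>
          (\<Sum>l = 0..j + k + 1. (-1) ^ l * real (j + k + 1 choose l)
              * hh t (i + l) (i + l - (j + k)) k) = 0)"
proof -
  have tb: "\<And>i j. j \<le> i \<Longrightarrow> t i j = c * real (i choose j)"
    by (rule t_binom[of t c, OF bound pascal])
  have P1: "\<forall>i j. j \<le> i \<longrightarrow> t i j = t i (i - j)"
    using tb by (simp add: binomial_symmetric[symmetric])
  have P2: "\<forall>j k i. j + k \<le> i \<longrightarrow> hh t i j k = hh t i (i - (j + k)) k"
  proof (intro allI impI)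
    fix j k i :: nat assume "j + k \<le> i"
    then show "hh t i j k = hh t i (i - (j + k)) k"
      by (rule hh_sym[of t, rotated]) (use P1 in blast)
  qed
  have P3: "\<forall>j k i. j + k \<le> i \<longrightarrow>
          (\<Sum>l = 0..j + k + 1. (-1) ^ l * real (j + k + 1 choose l) * hh t (i + l) j k) = 0"
  proof (intro allI impI)
    fix j k i :: nat assume "j + k \<le> i"
    then have "S (Suc (j + k)) (\<lambda>i. hh t i j k) i = 0"
      using hh_PP[OF tb, of j k] unfolding PP_def by blast
    then show "(\<Sum>l = 0..j + k + 1. (-1) ^ l * real (j + k + 1 choose l) * hh t (i + l) j k) = 0"
      unfolding S_def by simp
  qed
  have P4: "\<forall>j k i. j + k \<le> i \<longrightarrow>
          (\<Sum>l = 0..j + k + 1. (-1) ^ l * real (j + k + 1 choose l)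
              * hh t (i + l) (i + l - (j + k)) k) = 0"
  proof (intro allI impI)
    fix j k i :: nat assume h: "j + k \<le> i"
    have eq: "(\<Sum>l = 0..j + k + 1. (-1) ^ l * real (j + k + 1 choose l)
              * hh t (i + l) (i + l - (j + k)) k)
        = (\<Sum>l = 0..j + k + 1. (-1) ^ l * real (j + k + 1 choose l) * hh t (i + l) j k)"
    proof (rule sum.cong[OF refl])
      fix l assume "l \<in> {0..j + k + 1}"
      have jl: "j + k \<le> i + l" using h by simp
      show "(-1) ^ l * real (j + k + 1 choose l) * hh t (i + l) (i + l - (j + k)) k
          = (-1) ^ l * real (j + k + 1 choose l) * hh t (i + l) j k"
        by (simp only: P2[rule_format, OF jl])
    qed
    show "(\<Sum>l = 0..j + k + 1. (-1) ^ l * real (j + k + 1 choose l)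
              * hh t (i + l) (i + l - (j + k)) k) = 0"
      using trans[OF eq P3[rule_format, OF h]] .
  qed
  show ?thesis using P1 P2 P3 P4 by (intro conjI)
qed

end
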